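(* Let $X$ be a complex linear space and $A\colon X\to\mathbb{C}$ a nonzero additive functional, and put $\phi(x,y)=-A(x)A(y)$ for $x,y\in X$. Then a function $f\colon X\to\mathbb{C}$ satisfies $f(x+y)=f(x)f(y)-\phi(x,y)$ for all $x,y\in X$ if and only if $f(x)=\gamma A(x)+1$ for all $x\in X$ with $\gamma\in\{i,-i\}$.
   Context: A functional $A\colon X\to\mathbb{C}$ is additive if $A(x+y)=A(x)+A(y)$ for all $x,y\in X$ (it need not be $\mathbb{C}$-linear). *)

theory Defs
  imports Complex_Main
begin

definition additive_functional :: "('a::ab_group_add \<Rightarrow> complex) \<Rightarrow> bool" where
  "additive_functional A \<longleftrightarrow> (\<forall>x y. A (x + y) = A x + A y)"

end

theory Submission
  imports Defs
begin

lemma sq_neg1: "(c::complex) * c = -1 \<Longrightarrow> c = \<i> \<or> c = -\<i>"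
proof -
  assume h: "c * c = -1"
  have "(c - \<i>) * (c + \<i>) = 0" using h by (simp add: algebra_simps)
  thus ?thesis by (simp add: eq_neg_iff_add_eq_0)
qed

theorem mainTheorem9:
  fixes scale :: "complex \<Rightarrow> 'a::ab_group_add \<Rightarrow> 'a"
    and A :: "'a \<Rightarrow> complex"
    and f :: "'a \<Rightarrow> complex"
  assumes "vector_space scale"
    and "additive_functional A"
    and "A \<noteq> (\<lambda>x. 0)"
  shows "(\<forall>x y. f (x + y) = f x * f y - (- A x * A y)) \<longleftrightarrow>
         (\<exists>\<gamma>\<in>{\<i>, -\<i>}. \<forall>x. f x = \<gamma> * A x + 1)"
proof
  have add: "\<And>x y. A (x + y) = A x + A y" using assms(2) unfolding additive_functional_def by blast
  obtain y0 where y0: "A y0 \<noteq> 0" using assms(3) by auto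
  assume F: "\<forall>x y. f (x + y) = f x * f y - (- A x * A y)"
  have key: "\<And>x y z. A x * A y * (f z - 1) = A y * A z * (f x - 1)"
  proof -
    fix x y z
    have e1: "f ((x + y) + z) = (f x * f y + A x * A y) * f z + (A x + A y) * A z"
      using F add by simp
    have e2: "f (x + (y + z)) = f x * (f y * f z + A y * A z) + A x * (A y + A z)"
      using F add by simp
    have "f ((x + y) + z) = f (x + (y + z))" by (simp add: add.assoc)
    hence "(f x * f y + A x * A y) * f z + (A x + A y) * A z
         = f x * (f y * f z + A y * A z) + A x * (A y + A z)"
      using e1 e2 by simp
    thus "A x * A y * (f z - 1) = A y * A z * (f x - 1)" by (simp add: algebra_simps)
  qed
  define c where "c = (f y0 - 1) / A y0"
  have fz: "\<And>z. f z = c * A z + 1"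
  proof -
    fix z
    have "A y0 * A y0 * (f z - 1) = A y0 * A z * (f y0 - 1)" by (rule key)
    hence "A y0 * (f z - 1) = A z * (f y0 - 1)" using y0 by (simp add: mult.assoc)
    hence "f z - 1 = c * A z" using y0 unfolding c_def by (simp add: field_simps)
    thus "f z = c * A z + 1" by (simp add: algebra_simps)
  qed
  have "f (y0 + y0) = f y0 * f y0 - (- A y0 * A y0)" using F by blast
  hence "(c * c + 1) * (A y0 * A y0) = 0" using fz add by (simp add: algebra_simps)
  hence "c * c = -1" using y0 by (simp add: eq_neg_iff_add_eq_0)
  hence "c = \<i> \<or> c = -\<i>" by (rule sq_neg1)
  thus "\<exists>\<gamma>\<in>{\<i>, -\<i>}. \<forall>x. f x = \<gamma> * A x + 1" using fz by auto
next
  have add: "\<And>x y. A (x + y) = A x + A y" using assms(2) unfolding additive_functional_def by blast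
  assume "\<exists>\<gamma>\<in>{\<i>, -\<i>}. \<forall>x. f x = \<gamma> * A x + 1"
  then obtain g where gi: "g \<in> {\<i>, -\<i>}" and fg: "\<And>x. f x = g * A x + 1" by blast
  have g: "g * g = -1" using gi by auto
  show "\<forall>x y. f (x + y) = f x * f y - (- A x * A y)"
  proof (intro allI)
    fix x y
    have "f x * f y - (- A x * A y) = (g * g) * (A x * A y) + g * A x + g * A y + 1 + A x * A y"
      by (simp add: fg algebra_simps)
    also have "\<dots> = g * (A x + A y) + 1" using g by (simp add: algebra_simps)
    finally show "f (x + y) = f x * f y - (- A x * A y)" by (simp add: fg add)
  qed
qed

end
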